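(* Let $\mathcal{L}_{ED}:=\{L_{\varepsilon,\delta}:\varepsilon\ge0,\delta\in[0,1]\}$. There exist $\varepsilon\ge0$ and $\delta\in[0,1]$ such that, with budget $B:=L_{\varepsilon,\delta}\in\mathcal{L}_{ED}$, the natural filter with queries in $\mathcal{L}_{ED}$ and query capacity $k=2$ is not free, i.e. $\mathrm{PLD}(\mathrm{Filter}_{\mathcal{L}_{ED},B,2})\not\preceq B$.
   Context: For $\varepsilon\ge0,\delta\in[0,1]$, $f_{\varepsilon,\delta}(\alpha):=\max\{0,1-\delta-e^\varepsilon\alpha,e^{-\varepsilon}(1-\delta-\alpha)\}$, and $L_{\varepsilon,\delta}$ is the PLD whose tradeoff curve is $f_{\varepsilon,\delta}$ (the tradeoff curve of a pair $(P,Q)$ being $\alpha\mapsto\inf\{\beta_\phi:\alpha_\phi\le\alpha\}$ over tests with Type I error under $P$ and Type II error under $Q$). A PLD is the law of $\log\frac{dP}{dQ}(\omega)$, $\omega\sim P$; $\mathrm{Id}=L_{0,0}$ is the point mass at 0. Fix datasets $D_1,D_2$; $\mathrm{PLD}(M):=\mathrm{PLD}(M(D_1)\|M(D_2))$; $\preceq$ is the Blackwell order on PLDs, $\oplus$ convolution, $\sup$ least upper bound. A privacy rule of length $k$ maps sequences $(L_1,\dots,L_{k'})$, $0\le k'<k$, to sets of PLDs containing $\mathrm{Id}$; a $\Gamma$-adversary is an adaptive composition $M_1\otimes\cdots\otimes M_k$ with $\mathrm{PLD}(M_i(\cdot;y_{<i}))\in\Gamma(L_1,\dots,L_{i-1})$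 for every history of outputs; $\mathrm{PLD}(\Gamma)$ is the sup over $\Gamma$-adversaries. $\mathrm{Filter}_{\mathcal{L},B,k}(L_1,\dots,L_{k'}):=\{L\in\mathcal{L}:L_1\oplus\cdots\oplus L_{k'}\oplus L\preceq B\}$; the natural filter is free for $(\mathcal{L},B,k)$ if $\mathrm{PLD}(\mathrm{Filter}_{\mathcal{L},B,k})\preceq B$. *)

theory Defs
  imports "HOL-Probability.Probability"
begin

text \<open>Everything is for fixed datasets D1, D2: a mechanism is represented by the pair
(P, Q) of its output distributions on D1 and D2.  Output spaces are discrete.\<close>

definition tradeoff :: "'a pmf \<Rightarrow> 'a pmf \<Rightarrow> real \<Rightarrow> real" where
  "tradeoff P Q \<alpha> = Inf {1 - measure_pmf.expectation Q \<phi> | \<phi>.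
      (\<forall>x. 0 \<le> \<phi> x \<and> \<phi> x \<le> 1) \<and> measure_pmf.expectation P \<phi> \<le> \<alpha>}"

definition f_ED :: "real \<Rightarrow> real \<Rightarrow> real \<Rightarrow> real" where
  "f_ED \<epsilon> \<delta> \<alpha> = max 0 (max (1 - \<delta> - exp \<epsilon> * \<alpha>) (exp (- \<epsilon>) * (1 - \<delta> - \<alpha>)))"

text \<open>PLD(P||Q) \<preceq> L, where L is the PLD with tradeoff curve g (Blackwell order,
via Blackwell's theorem: pointwise comparison of tradeoff curves on [0,1]).\<close>
definition pld_le :: "'a pmf \<Rightarrow> 'a pmf \<Rightarrow> (real \<Rightarrow> real) \<Rightarrow> bool" where
  "pld_le P Q g \<longleftrightarrow> (\<forall>\<alpha>\<in>{0..1}. g \<alpha> \<le> tradeoff P Q \<alpha>)"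

definition pld_is_ED :: "'a pmf \<Rightarrow> 'a pmf \<Rightarrow> real \<Rightarrow> real \<Rightarrow> bool" where
  "pld_is_ED P Q \<epsilon> \<delta> \<longleftrightarrow> 0 \<le> \<epsilon> \<and> 0 \<le> \<delta> \<and> \<delta> \<le> 1 \<and>
      (\<forall>\<alpha>\<in>{0..1}. tradeoff P Q \<alpha> = f_ED \<epsilon> \<delta> \<alpha>)"

definition pld_in_LED :: "'a pmf \<Rightarrow> 'a pmf \<Rightarrow> bool" where
  "pld_in_LED P Q \<longleftrightarrow> (\<exists>\<epsilon> \<delta>. pld_is_ED P Q \<epsilon> \<delta>)"

definition adaptive_comp :: "'a pmf \<Rightarrow> ('a \<Rightarrow> 'b pmf) \<Rightarrow> ('a \<times> 'b) pmf" where
  "adaptive_comp P1 P2 = bind_pmf P1 (\<lambda>y. map_pmf (Pair y) (P2 y))"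

text \<open>A Filter_{L_ED,B,2}-adversary with B = L_{eps,delta}:
first query PLD(M1) \<in> L_ED with PLD(M1) \<preceq> B;
for every output y1, PLD(M2(.;y1)) \<in> L_ED with PLD(M1) \<oplus> PLD(M2(.;y1)) \<preceq> B
(convolution of PLDs = PLD of the independent product pair).\<close>
definition filter_adversary ::
  "real \<Rightarrow> real \<Rightarrow> nat pmf \<Rightarrow> nat pmf \<Rightarrow> (nat \<Rightarrow> nat pmf) \<Rightarrow> (nat \<Rightarrow> nat pmf) \<Rightarrow> bool" where
  "filter_adversary \<epsilon> \<delta> P1 Q1 P2 Q2 \<longleftrightarrow>
     pld_in_LED P1 Q1 \<and> pld_le P1 Q1 (f_ED \<epsilon> \<delta>) \<and>
     (\<forall>y. pld_in_LED (P2 y) (Q2 y) \<and>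
          pld_le (pair_pmf P1 (P2 y)) (pair_pmf Q1 (Q2 y)) (f_ED \<epsilon> \<delta>))"

text \<open>The natural filter is free for (L_ED, L_{eps,delta}, 2): the sup of the PLDs of all
filter adversaries is \<preceq> B, i.e. (least upper bound) every such PLD is \<preceq> B.\<close>
definition natural_filter_free_ED2 :: "real \<Rightarrow> real \<Rightarrow> bool" where
  "natural_filter_free_ED2 \<epsilon> \<delta> \<longleftrightarrow>
     (\<forall>P1 Q1 P2 Q2. filter_adversary \<epsilon> \<delta> P1 Q1 P2 Q2 \<longrightarrow>
        pld_le (adaptive_comp P1 P2) (adaptive_comp Q1 Q2) (f_ED \<epsilon> \<delta>))"

end

theory Submission
  imports Defs
begin

lemma exp_le1:
  assumes "\<forall>x. 0 \<le> \<phi> x \<and> \<phi> x \<le> (1::real)"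
  shows "measure_pmf.expectation M \<phi> \<le> 1"
proof -
  have "measure_pmf.expectation M \<phi> \<le> measure_pmf.expectation M (\<lambda>_. 1)"
    using assms by (intro integral_mono measure_pmf.integrable_const_bound[where B=1]) auto
  then show ?thesis by simp
qed

lemma exp_ge0:
  assumes "\<forall>x. 0 \<le> \<phi> x \<and> \<phi> x \<le> (1::real)"
  shows "0 \<le> measure_pmf.expectation M \<phi>"
  using assms by (intro integral_nonneg_AE) auto

lemma tradeoff_le:
  assumes "\<forall>x. 0 \<le> \<phi> x \<and> \<phi> x \<le> (1::real)" "measure_pmf.expectation P \<phi> \<le> \<alpha>"
  shows "tradeoff P Q \<alpha> \<le> 1 - measure_pmf.expectation Q \<phi>"
  unfolding tradeoff_def
proof (rule cInf_lower)
  show "1 - measure_pmf.expectation Q \<phi> \<in> {1 - measure_pmf.expectation Q \<phi> | \<phi>.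
      (\<forall>x. 0 \<le> \<phi> x \<and> \<phi> x \<le> 1) \<and> measure_pmf.expectation P \<phi> \<le> \<alpha>}"
    using assms by blast
  show "bdd_below {1 - measure_pmf.expectation Q \<phi> | \<phi>.
      (\<forall>x. 0 \<le> \<phi> x \<and> \<phi> x \<le> 1) \<and> measure_pmf.expectation P \<phi> \<le> \<alpha>}"
    by (rule bdd_belowI[where m=0]) (auto dest: exp_le1[where M=Q])
qed

lemma pld_leI:
  assumes H: "\<And>\<phi>. \<forall>x. 0 \<le> \<phi> x \<and> \<phi> x \<le> (1::real) \<Longrightarrow>
     measure_pmf.expectation Q \<phi> \<le> \<delta> + exp \<epsilon> * measure_pmf.expectation P \<phi> \<and>
     1 - measure_pmf.expectation P \<phi> \<le> \<delta> + exp \<epsilon> * (1 - measure_pmf.expectation Q \<phi>)"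
  shows "pld_le P Q (f_ED \<epsilon> \<delta>)"
  unfolding pld_le_def
proof
  fix \<alpha> :: real assume a: "\<alpha> \<in> {0..1}"
  show "f_ED \<epsilon> \<delta> \<alpha> \<le> tradeoff P Q \<alpha>"
    unfolding tradeoff_def
  proof (rule cInf_greatest)
    show "{1 - measure_pmf.expectation Q \<phi> | \<phi>.
      (\<forall>x. 0 \<le> \<phi> x \<and> \<phi> x \<le> 1) \<and> measure_pmf.expectation P \<phi> \<le> \<alpha>} \<noteq> {}"
      using a by (auto intro!: exI[where x="\<lambda>_. 0"])
  next
    fix t assume "t \<in> {1 - measure_pmf.expectation Q \<phi> | \<phi>.
      (\<forall>x. 0 \<le> \<phi> x \<and> \<phi> x \<le> 1) \<and> measure_pmf.expectation P \<phi> \<le> \<alpha>}"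
    then obtain \<phi> where t: "t = 1 - measure_pmf.expectation Q \<phi>" and p: "\<forall>x. 0 \<le> \<phi> x \<and> \<phi> x \<le> 1"
      and e: "measure_pmf.expectation P \<phi> \<le> \<alpha>" by blast
    note h = H[OF p]
    have q1: "measure_pmf.expectation Q \<phi> \<le> 1" using exp_le1[OF p] .
    have ep: "exp \<epsilon> > 0" by simp
    have m: "exp \<epsilon> * measure_pmf.expectation P \<phi> \<le> exp \<epsilon> * \<alpha>"
      by (rule mult_left_mono[OF e]) simp
    have 1: "1 - \<delta> - exp \<epsilon> * \<alpha> \<le> t"
      using h m t by linarith
    have "1 - \<delta> - \<alpha> \<le> exp \<epsilon> * t" using h e t by auto
    then have "exp (-\<epsilon>) * (1 - \<delta> - \<alpha>) \<le> exp (-\<epsilon>) * (exp \<epsilon> * t)"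
      by (intro mult_left_mono) auto
    also have "\<dots> = t" by (simp add: exp_minus)
    finally have 2: "exp (-\<epsilon>) * (1 - \<delta> - \<alpha>) \<le> t" .
    show "f_ED \<epsilon> \<delta> \<alpha> \<le> t" unfolding f_ED_def using 1 2 q1 t by auto
  qed
qed

lemma exp_finite:
  assumes "finite A" "\<And>x. x \<notin> A \<Longrightarrow> pmf M x = 0"
  shows "measure_pmf.expectation M (\<phi>::_\<Rightarrow>real) = (\<Sum>a\<in>A. \<phi> a * pmf M a)"
  using assms by (intro integral_measure_pmf_real) (auto simp: set_pmf_eq)

lemma pmf_adaptive: "pmf (adaptive_comp P1 P2) (a,b) = pmf P1 a * pmf (P2 a) b"
proof -
  have m: "pmf (map_pmf (Pair y) M) (a,b) = (if a = y then pmf M b else 0)" for y and M :: "'b pmf"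
  proof (cases "a = y")
    case True then show ?thesis by (simp add: pmf_map_inj' inj_on_def)
  next
    case False
    then have "(a,b) \<notin> set_pmf (map_pmf (Pair y) M)" by auto
    then show ?thesis using False by (simp add: set_pmf_eq)
  qed
  have "pmf (adaptive_comp P1 P2) (a,b) = (\<integral>y. (if a = y then pmf (P2 y) b else 0) \<partial>measure_pmf P1)"
    unfolding adaptive_comp_def pmf_bind m ..
  also have "\<dots> = (\<Sum>y\<in>{a}. (if a = y then pmf (P2 y) b else 0) * pmf P1 y)"
    by (intro integral_measure_pmf_real) (auto split: if_splits)
  finally show ?thesis by simp
qed

definition "P1 = pmf_of_list [(0::nat, 3/4::real), (1, 1/4)]"
definition "Q1 = pmf_of_list [(0::nat, 1/4::real), (1, 3/4)]"
definition "PA = pmf_of_list [(0::nat, 3/8::real), (1, 5/8)]"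
definition "QA = pmf_of_list [(2::nat, 3/8::real), (1, 5/8)]"

lemma pmf_P1: "pmf P1 x = (if x = 0 then 3/4 else if x = 1 then 1/4 else 0)"
  unfolding P1_def by (subst pmf_pmf_of_list) (auto simp: pmf_of_list_wf_def)
lemma pmf_Q1: "pmf Q1 x = (if x = 0 then 1/4 else if x = 1 then 3/4 else 0)"
  unfolding Q1_def by (subst pmf_pmf_of_list) (auto simp: pmf_of_list_wf_def)
lemma pmf_PA: "pmf PA x = (if x = 0 then 3/8 else if x = 1 then 5/8 else 0)"
  unfolding PA_def by (subst pmf_pmf_of_list) (auto simp: pmf_of_list_wf_def)
lemma pmf_QA: "pmf QA x = (if x = 2 then 3/8 else if x = 1 then 5/8 else 0)"
  unfolding QA_def by (subst pmf_pmf_of_list) (auto simp: pmf_of_list_wf_def)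

lemma E_P1: "measure_pmf.expectation P1 (\<phi>::nat\<Rightarrow>real) = 3/4 * \<phi> 0 + 1/4 * \<phi> 1"
  by (subst exp_finite[where A="{0,1}"]) (auto simp: pmf_P1)
lemma E_Q1: "measure_pmf.expectation Q1 (\<phi>::nat\<Rightarrow>real) = 1/4 * \<phi> 0 + 3/4 * \<phi> 1"
  by (subst exp_finite[where A="{0,1}"]) (auto simp: pmf_Q1)
lemma E_PA: "measure_pmf.expectation PA (\<phi>::nat\<Rightarrow>real) = 3/8 * \<phi> 0 + 5/8 * \<phi> 1"
  by (subst exp_finite[where A="{0,1}"]) (auto simp: pmf_PA)
lemma E_QA: "measure_pmf.expectation QA (\<phi>::nat\<Rightarrow>real) = 3/8 * \<phi> 2 + 5/8 * \<phi> 1"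
  by (subst exp_finite[where A="{2,1}"]) (auto simp: pmf_QA)

lemma f3: "f_ED (ln 3) \<delta> \<alpha> = max 0 (max (1 - \<delta> - 3 * \<alpha>) ((1 - \<delta> - \<alpha>) / 3))"
  by (simp add: f_ED_def exp_minus field_simps)

lemma ED_1: "pld_is_ED P1 Q1 (ln 3) 0"
  unfolding pld_is_ED_def
proof (intro conjI ballI)
  fix \<alpha> :: real assume a: "\<alpha> \<in> {0..1}"
  have "pld_le P1 Q1 (f_ED (ln 3) 0)"
  proof (rule pld_leI)
    fix \<phi> :: "nat \<Rightarrow> real" assume "\<forall>x. 0 \<le> \<phi> x \<and> \<phi> x \<le> 1"
    then have "0 \<le> \<phi> 0" "\<phi> 0 \<le> 1" "0 \<le> \<phi> 1" "\<phi> 1 \<le> 1" by auto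
    then show "measure_pmf.expectation Q1 \<phi> \<le> 0 + exp (ln 3) * measure_pmf.expectation P1 \<phi> \<and>
      1 - measure_pmf.expectation P1 \<phi> \<le> 0 + exp (ln 3) * (1 - measure_pmf.expectation Q1 \<phi>)"
      by (simp add: E_P1 E_Q1)
  qed
  then have ge: "f_ED (ln 3) 0 \<alpha> \<le> tradeoff P1 Q1 \<alpha>"
    using a unfolding pld_le_def by auto
  show "tradeoff P1 Q1 \<alpha> = f_ED (ln 3) 0 \<alpha>"
  proof (cases "\<alpha> \<le> 1/4")
    case True
    let ?\<phi> = "\<lambda>x::nat. if x = 1 then 4 * \<alpha> else 0"
    have "tradeoff P1 Q1 \<alpha> \<le> 1 - measure_pmf.expectation Q1 ?\<phi>"
      using a True by (intro tradeoff_le) (auto simp: E_P1)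
    then show ?thesis using ge True a by (auto simp: E_Q1 f3)
  next
    case False
    let ?\<phi> = "\<lambda>x::nat. if x = 1 then 1 else if x = 0 then (\<alpha> - 1/4) * 4 / 3 else 0"
    have "tradeoff P1 Q1 \<alpha> \<le> 1 - measure_pmf.expectation Q1 ?\<phi>"
      using a False by (intro tradeoff_le) (auto simp: E_P1 field_simps)
    then show ?thesis using ge False a by (auto simp: E_Q1 f3 field_simps)
  qed
qed auto

lemma ED_A: "pld_is_ED PA QA 0 (3/8)"
  unfolding pld_is_ED_def
proof (intro conjI ballI)
  fix \<alpha> :: real assume a: "\<alpha> \<in> {0..1}"
  have "pld_le PA QA (f_ED 0 (3/8))"
  proof (rule pld_leI)
    fix \<phi> :: "nat \<Rightarrow> real" assume "\<forall>x. 0 \<le> \<phi> x \<and> \<phi> x \<le> 1"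
    then have "0 \<le> \<phi> 0" "\<phi> 0 \<le> 1" "0 \<le> \<phi> 1" "\<phi> 1 \<le> 1" "0 \<le> \<phi> 2" "\<phi> 2 \<le> 1" by auto
    then show "measure_pmf.expectation QA \<phi> \<le> 3/8 + exp 0 * measure_pmf.expectation PA \<phi> \<and>
      1 - measure_pmf.expectation PA \<phi> \<le> 3/8 + exp 0 * (1 - measure_pmf.expectation QA \<phi>)"
      by (simp add: E_PA E_QA)
  qed
  then have ge: "f_ED 0 (3/8) \<alpha> \<le> tradeoff PA QA \<alpha>"
    using a unfolding pld_le_def by auto
  show "tradeoff PA QA \<alpha> = f_ED 0 (3/8) \<alpha>"
  proof (cases "\<alpha> \<le> 5/8")
    case True
    let ?\<phi> = "\<lambda>x::nat. if x = 2 then 1 else if x = 1 then \<alpha> * 8 / 5 else 0"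
    have "tradeoff PA QA \<alpha> \<le> 1 - measure_pmf.expectation QA ?\<phi>"
      using a True by (intro tradeoff_le) (auto simp: E_PA)
    then show ?thesis using ge True a by (auto simp: E_QA f_ED_def)
  next
    case False
    let ?\<phi> = "\<lambda>x::nat. if x = 2 then 1 else if x = 1 then 1 else 0"
    have "tradeoff PA QA \<alpha> \<le> 1 - measure_pmf.expectation QA ?\<phi>"
      using a False by (intro tradeoff_le) (auto simp: E_PA)
    then show ?thesis using ge False a by (auto simp: E_QA f_ED_def)
  qed
qed auto

definition "P2 y = (if y = 0 then P1 else PA)"
definition "Q2 y = (if y = 0 then Q1 else QA)"

lemma E_pB: "measure_pmf.expectation (pair_pmf P1 P1) (\<phi>::nat\<times>nat\<Rightarrow>real) =
   9/16 * \<phi> (0,0) + 3/16 * \<phi> (0,1) + 3/16 * \<phi> (1,0) + 1/16 * \<phi> (1,1)"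
  by (subst exp_finite[where A="{0,1}\<times>{0,1}"]) (auto simp: pmf_pair pmf_P1 split: if_splits)
lemma E_qB: "measure_pmf.expectation (pair_pmf Q1 Q1) (\<phi>::nat\<times>nat\<Rightarrow>real) =
   1/16 * \<phi> (0,0) + 3/16 * \<phi> (0,1) + 3/16 * \<phi> (1,0) + 9/16 * \<phi> (1,1)"
  by (subst exp_finite[where A="{0,1}\<times>{0,1}"]) (auto simp: pmf_pair pmf_Q1 split: if_splits)
lemma E_pA: "measure_pmf.expectation (pair_pmf P1 PA) (\<phi>::nat\<times>nat\<Rightarrow>real) =
   9/32 * \<phi> (0,0) + 15/32 * \<phi> (0,1) + 3/32 * \<phi> (1,0) + 5/32 * \<phi> (1,1)"
  by (subst exp_finite[where A="{0,1}\<times>{0,1}"]) (auto simp: pmf_pair pmf_P1 pmf_PA split: if_splits)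
lemma E_qA: "measure_pmf.expectation (pair_pmf Q1 QA) (\<phi>::nat\<times>nat\<Rightarrow>real) =
   3/32 * \<phi> (0,2) + 5/32 * \<phi> (0,1) + 9/32 * \<phi> (1,2) + 15/32 * \<phi> (1,1)"
  by (subst exp_finite[where A="{0,1}\<times>{2,1}"]) (auto simp: pmf_pair pmf_Q1 pmf_QA split: if_splits)

lemma E_pAd: "measure_pmf.expectation (adaptive_comp P1 P2) (\<phi>::nat\<times>nat\<Rightarrow>real) =
   9/16 * \<phi> (0,0) + 3/16 * \<phi> (0,1) + 3/32 * \<phi> (1,0) + 5/32 * \<phi> (1,1)"
  by (subst exp_finite[where A="{0,1}\<times>{0,1}"]) (auto simp: pmf_adaptive pmf_P1 pmf_PA P2_def split: if_splits)
lemma E_qAd: "measure_pmf.expectation (adaptive_comp Q1 Q2) (\<phi>::nat\<times>nat\<Rightarrow>real) =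
   1/16 * \<phi> (0,0) + 3/16 * \<phi> (0,1) + 9/32 * \<phi> (1,2) + 15/32 * \<phi> (1,1)"
  by (subst exp_finite[where A="{(0,0),(0,1),(1,2),(1,1)}"]) (auto simp: pmf_adaptive pmf_Q1 pmf_QA Q2_def split: if_splits)

lemma adv: "filter_adversary (ln 3) (3/8) P1 Q1 P2 Q2"
  unfolding filter_adversary_def
proof (intro conjI allI)
  show "pld_in_LED P1 Q1" using ED_1 unfolding pld_in_LED_def by blast
  show "pld_le P1 Q1 (f_ED (ln 3) (3/8))"
  proof (rule pld_leI)
    fix \<phi> :: "nat \<Rightarrow> real" assume "\<forall>x. 0 \<le> \<phi> x \<and> \<phi> x \<le> 1"
    then have "0 \<le> \<phi> 0" "\<phi> 0 \<le> 1" "0 \<le> \<phi> 1" "\<phi> 1 \<le> 1" by auto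
    then show "measure_pmf.expectation Q1 \<phi> \<le> 3/8 + exp (ln 3) * measure_pmf.expectation P1 \<phi> \<and>
      1 - measure_pmf.expectation P1 \<phi> \<le> 3/8 + exp (ln 3) * (1 - measure_pmf.expectation Q1 \<phi>)"
      by (simp add: E_P1 E_Q1)
  qed
  fix y
  show "pld_in_LED (P2 y) (Q2 y)" using ED_1 ED_A unfolding pld_in_LED_def P2_def Q2_def by auto
  show "pld_le (pair_pmf P1 (P2 y)) (pair_pmf Q1 (Q2 y)) (f_ED (ln 3) (3/8))"
  proof (cases "y = 0")
    case True
    have e: "P2 y = P1" "Q2 y = Q1" using True by (auto simp: P2_def Q2_def)
    show ?thesis unfolding e
    proof (rule pld_leI)
      fix \<phi> :: "nat\<times>nat \<Rightarrow> real" assume "\<forall>x. 0 \<le> \<phi> x \<and> \<phi> x \<le> 1"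
      then have "0 \<le> \<phi> (0,0)" "\<phi> (0,0) \<le> 1" "0 \<le> \<phi> (0,1)" "\<phi> (0,1) \<le> 1"
         "0 \<le> \<phi> (1,0)" "\<phi> (1,0) \<le> 1" "0 \<le> \<phi> (1,1)" "\<phi> (1,1) \<le> 1" by auto
      then show "measure_pmf.expectation (pair_pmf Q1 Q1) \<phi> \<le> 3/8 + exp (ln 3) * measure_pmf.expectation (pair_pmf P1 P1) \<phi> \<and>
        1 - measure_pmf.expectation (pair_pmf P1 P1) \<phi> \<le> 3/8 + exp (ln 3) * (1 - measure_pmf.expectation (pair_pmf Q1 Q1) \<phi>)"
        by (simp add: E_pB E_qB)
    qed
  next
    case False
    have e: "P2 y = PA" "Q2 y = QA" using False by (auto simp: P2_def Q2_def)
    show ?thesis unfolding e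
    proof (rule pld_leI)
      fix \<phi> :: "nat\<times>nat \<Rightarrow> real" assume "\<forall>x. 0 \<le> \<phi> x \<and> \<phi> x \<le> 1"
      then have "0 \<le> \<phi> (0,0)" "\<phi> (0,0) \<le> 1" "0 \<le> \<phi> (0,1)" "\<phi> (0,1) \<le> 1"
         "0 \<le> \<phi> (1,0)" "\<phi> (1,0) \<le> 1" "0 \<le> \<phi> (1,1)" "\<phi> (1,1) \<le> 1"
         "0 \<le> \<phi> (0,2)" "\<phi> (0,2) \<le> 1" "0 \<le> \<phi> (1,2)" "\<phi> (1,2) \<le> 1" by auto
      then show "measure_pmf.expectation (pair_pmf Q1 QA) \<phi> \<le> 3/8 + exp (ln 3) * measure_pmf.expectation (pair_pmf P1 PA) \<phi> \<and>
        1 - measure_pmf.expectation (pair_pmf P1 PA) \<phi> \<le> 3/8 + exp (ln 3) * (1 - measure_pmf.expectation (pair_pmf Q1 QA) \<phi>)"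
        by (simp add: E_pA E_qA)
    qed
  qed
qed

lemma not_le: "\<not> pld_le (adaptive_comp P1 P2) (adaptive_comp Q1 Q2) (f_ED (ln 3) (3/8))"
proof
  assume h: "pld_le (adaptive_comp P1 P2) (adaptive_comp Q1 Q2) (f_ED (ln 3) (3/8))"
  let ?\<phi> = "\<lambda>(a::nat,b::nat). if b = 0 then 0 else (1::real)"
  have "tradeoff (adaptive_comp P1 P2) (adaptive_comp Q1 Q2) (11/32) \<le> 1 - measure_pmf.expectation (adaptive_comp Q1 Q2) ?\<phi>"
    by (rule tradeoff_le) (auto simp: E_pAd)
  also have "\<dots> = 1/16" by (simp add: E_qAd)
  finally have "tradeoff (adaptive_comp P1 P2) (adaptive_comp Q1 Q2) (11/32) \<le> 1/16" .
  moreover have "f_ED (ln 3) (3/8) (11/32) \<le> tradeoff (adaptive_comp P1 P2) (adaptive_comp Q1 Q2) (11/32)"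
    using h unfolding pld_le_def by auto
  moreover have "f_ED (ln 3) (3/8) (11/32) = 3/32" by (simp add: f3)
  ultimately show False by simp
qed

theorem corollary5p3:
  shows "\<exists>\<epsilon> \<delta>::real. 0 \<le> \<epsilon> \<and> 0 \<le> \<delta> \<and> \<delta> \<le> 1 \<and> \<not> natural_filter_free_ED2 \<epsilon> \<delta>"
proof (intro exI conjI)
  show "0 \<le> ln (3::real)" by simp
  show "\<not> natural_filter_free_ED2 (ln 3) (3/8)"
    unfolding natural_filter_free_ED2_def using adv not_le by blast
qed auto

end
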